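(* There exists a data structure for the dynamic variant of Disjoint Factors with $k=2$ that supports updates and queries in amortized time $\mathcal{O}(1)$.
   Context: Disjoint Factors with $k=2$: given $w\in\{1,2\}^\star$, decide whether there exist disjoint (contiguous) subwords $w_1,w_2$ of $w$, each of length at least $2$, with $w_i$ beginning and ending with symbol $i$. Dynamic variant: a data structure maintaining $w$ under updates replacing single symbols and answering whether the current word is a yes-instance. Word-RAM model. *)

theory Defs
  imports Main
begin

text \<open>Words over the alphabet {1,2} are lists of naturals with entries 1 or 2 (positions 0-indexed).
  A contiguous subword of length at least 2 beginning and ending with symbol s is given by
  positions i < j with w!i = s and w!j = s; two such subwords are disjoint iff their
  position intervals are disjoint.\<close>

definition DF2 :: "nat list \<Rightarrow> bool" where
  "DF2 u \<longleftrightarrow> (\<exists>i j p q. i < j \<and> j < length u \<and> p < q \<and> q < length u \<and>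
      u ! i = 1 \<and> u ! j = 1 \<and> u ! p = 2 \<and> u ! q = 2 \<and> (j < p \<or> q < i))"

text \<open>Memory is a map from addresses to words (naturals below 2^w). Instruction operands
  are (constant) memory addresses; Load/Store provide indirect addressing.\<close>

datatype instr =
    Const nat nat
  | Add nat nat nat
  | Sub nat nat nat          \<comment> \<open>M[a] := (M[b] - M[c]) mod 2^w (wrap-around)\<close>
  | Mul nat nat nat
  | Div nat nat nat
  | BAnd nat nat nat
  | BOr nat nat nat
  | BXor nat nat nat
  | Shl nat nat nat
  | Shr nat nat nat
  | Lt nat nat nat
  | Load nat nat
  | Store nat nat
  | Jz nat nat
  | Jmp nat
  | Halt

type_synonym mem = "nat \<Rightarrow> nat"
type_synonym rstate = "nat \<times> mem"

definition halted :: "instr list \<Rightarrow> rstate \<Rightarrow> bool" where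
  "halted P s \<longleftrightarrow> fst s \<ge> length P \<or> P ! fst s = Halt"

fun exec_instr :: "nat \<Rightarrow> instr \<Rightarrow> rstate \<Rightarrow> rstate" where
  "exec_instr w (Const a k) (pc, M) = (Suc pc, M(a := k mod 2^w))"
| "exec_instr w (Add a b c) (pc, M) = (Suc pc, M(a := (M b + M c) mod 2^w))"
| "exec_instr w (Sub a b c) (pc, M) = (Suc pc, M(a := (M b + (2^w - M c mod 2^w)) mod 2^w))"
| "exec_instr w (Mul a b c) (pc, M) = (Suc pc, M(a := (M b * M c) mod 2^w))"
| "exec_instr w (Div a b c) (pc, M) = (Suc pc, M(a := M b div M c))"
| "exec_instr w (BAnd a b c) (pc, M) = (Suc pc, M(a := and (M b) (M c)))"
| "exec_instr w (BOr a b c) (pc, M) = (Suc pc, M(a := or (M b) (M c)))"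
| "exec_instr w (BXor a b c) (pc, M) = (Suc pc, M(a := xor (M b) (M c)))"
| "exec_instr w (Shl a b c) (pc, M) = (Suc pc, M(a := (M b * 2 ^ M c) mod 2^w))"
| "exec_instr w (Shr a b c) (pc, M) = (Suc pc, M(a := M b div 2 ^ M c))"
| "exec_instr w (Lt a b c) (pc, M) = (Suc pc, M(a := (if M b < M c then 1 else 0)))"
| "exec_instr w (Load a b) (pc, M) = (Suc pc, M(a := M (M b)))"
| "exec_instr w (Store a b) (pc, M) = (Suc pc, M(M a := M b))"
| "exec_instr w (Jz a t) (pc, M) = (if M a = 0 then (t, M) else (Suc pc, M))"
| "exec_instr w (Jmp t) (pc, M) = (t, M)"
| "exec_instr w Halt (pc, M) = (pc, M)"

definition step :: "instr list \<Rightarrow> nat \<Rightarrow> rstate \<Rightarrow> rstate" where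
  "step P w s = (if halted P s then s else exec_instr w (P ! fst s) s)"

definition runs_in :: "instr list \<Rightarrow> nat \<Rightarrow> mem \<Rightarrow> nat \<Rightarrow> mem \<Rightarrow> bool" where
  "runs_in P w M t M' \<longleftrightarrow>
     (let s = (step P w ^^ t) (0, M) in halted P s \<and> snd s = M')"

datatype op = Upd nat nat | Qry

definition valid_op :: "nat \<Rightarrow> op \<Rightarrow> bool" where
  "valid_op n o' \<longleftrightarrow> (case o' of Upd i a \<Rightarrow> i < n \<and> a \<in> {1, 2} | Qry \<Rightarrow> True)"

text \<open>Initial memory on input word u: cell 0 holds n = length u, cells 1,2 are 0 (I/O cells),
  cell 3+i holds u!i, all other cells 0.\<close>
definition init_mem :: "nat list \<Rightarrow> mem" where
  "init_mem u = (\<lambda>x. if x = 0 then length u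
                      else if 3 \<le> x \<and> x - 3 < length u then u ! (x - 3) else 0)"

text \<open>An update (Upd i a) writes i to cell 1 and a to cell 2 and runs Pu;
  a query runs Pq and the answer is read off cell 0 (nonzero = yes), which must equal DF2 u.\<close>
inductive serve :: "instr list \<Rightarrow> instr list \<Rightarrow> nat \<Rightarrow> mem \<Rightarrow> nat list \<Rightarrow> op list \<Rightarrow> nat \<Rightarrow> bool"
  for Pu Pq w where
  serve_nil: "serve Pu Pq w M u [] 0"
| serve_upd: "runs_in Pu w (M(1 := i, 2 := a)) t M' \<Longrightarrow> serve Pu Pq w M' (u[i := a]) ops T
     \<Longrightarrow> serve Pu Pq w M u (Upd i a # ops) (t + T)"
| serve_qry: "runs_in Pq w M t M' \<Longrightarrow> (M' 0 \<noteq> 0) = DF2 u \<Longrightarrow> serve Pu Pq w M' u ops T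
     \<Longrightarrow> serve Pu Pq w M u (Qry # ops) (t + T)"

end

theory Submission
  imports Defs
begin


definition cnt1 :: "nat list \<Rightarrow> nat" where "cnt1 u = length (filter (\<lambda>x. x = 1) u)"

lemma two_el: assumes "2 \<le> card (T::nat set)" obtains p q where "p \<in> T" "q \<in> T" "p < q"
proof -
  have "finite T" using assms by (metis card.infinite not_numeral_le_zero)
  from assms obtain x y where "x \<in> T" "y \<in> T" "x \<noteq> y"
    by (metis One_nat_def card_le_Suc_iff numeral_2_eq_2 insert_iff)
  then show ?thesis using that by (metis linorder_neqE_nat)
qed

lemma card2: assumes "finite S" "x \<in> S" "y \<in> S" "x \<noteq> y" shows "2 \<le> card S"
proof -
  have "card {x,y} \<le> card S" using assms by (intro card_mono) auto
  then show ?thesis using assms by simp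
qed

lemma DF2_char:
  assumes su: "set u \<subseteq> {1,2}"
  shows "DF2 u \<longleftrightarrow> (2 \<le> cnt1 u \<and> 2 \<le> length u - cnt1 u \<and>
     (3 \<le> cnt1 u \<and> 3 \<le> length u - cnt1 u \<or> u!0 = u!1 \<or> u!(length u - 2) = u!(length u - 1)))"
proof -
  define n where "n = length u"
  define S1 where "S1 = {i. i < n \<and> u!i = 1}"
  define S2 where "S2 = {i. i < n \<and> u!i = 2}"
  have val: "i < n \<Longrightarrow> u!i = 1 \<or> u!i = 2" for i using su n_def nth_mem by fastforce
  have c1: "cnt1 u = card S1" unfolding cnt1_def S1_def n_def by (simp add: length_filter_conv_card)
  have c2: "n - cnt1 u = card S2"
  proof -
    have "length (filter (\<lambda>x. x = 1) u) + length (filter (\<lambda>x. \<not> x = 1) u) = length u"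
      by (rule sum_length_filter_compl)
    moreover have "length (filter (\<lambda>x. \<not> x = 1) u) = card S2"
      unfolding S2_def n_def length_filter_conv_card using val n_def by (metis (mono_tags, opaque_lifting) numeral_eq_one_iff semiring_norm(85))
    ultimately show ?thesis unfolding cnt1_def n_def by simp
  qed
  have fin1: "finite S1" "finite S2" unfolding S1_def S2_def by auto
  have DF: "DF2 u \<longleftrightarrow> (\<exists>i j p q. i < j \<and> i \<in> S1 \<and> j \<in> S1 \<and> p < q \<and> p \<in> S2 \<and> q \<in> S2 \<and> (j < p \<or> q < i))"
    unfolding DF2_def S1_def S2_def n_def mem_Collect_eq
    apply (rule iffI)
     apply (elim exE conjE)
    subgoal for i j p q by (rule exI[of _ i], rule exI[of _ j], rule exI[of _ p], rule exI[of _ q]) simp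
    apply (elim exE conjE)
    subgoal for i j p q by (rule exI[of _ i], rule exI[of _ j], rule exI[of _ p], rule exI[of _ q]) simp
    done
  have DFI: "\<And>i j p q. i<j \<Longrightarrow> i\<in>S1 \<Longrightarrow> j\<in>S1 \<Longrightarrow> p<q \<Longrightarrow> p\<in>S2 \<Longrightarrow> q\<in>S2 \<Longrightarrow> j<p \<or> q<i \<Longrightarrow> DF2 u"
    using DF by blast
  show ?thesis unfolding n_def[symmetric] c2 unfolding c1
  proof
    assume "DF2 u"
    then obtain i j p q where h: "i < j" "i \<in> S1" "j \<in> S1" "p < q" "p \<in> S2" "q \<in> S2" "j < p \<or> q < i"
      using DF by blast
    have a2: "2 \<le> card S1" using h fin1 card2[of S1 i j] by simp
    have b2: "2 \<le> card S2" using h fin1 card2[of S2 p q] by simp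
    show "2 \<le> card S1 \<and> 2 \<le> card S2 \<and> (3 \<le> card S1 \<and> 3 \<le> card S2 \<or> u ! 0 = u ! 1 \<or> u ! (n - 2) = u ! (n - 1))"
    proof (rule ccontr)
      assume "\<not> ?thesis"
      then have ne: "u!0 \<noteq> u!1" "u!(n-2) \<noteq> u!(n-1)" and ab: "card S1 = 2 \<or> card S2 = 2" using a2 b2 by auto
      have qn: "q < n" "j < n" using h unfolding S1_def S2_def by auto
      show False
      proof (cases "card S1 = 2")
        case True
        have "S1 = {i,j}" using True h fin1 card_subset_eq[of S1 "{i,j}"] by auto
        then have nS1: "x < n \<Longrightarrow> x \<noteq> i \<Longrightarrow> x \<noteq> j \<Longrightarrow> u!x = 2" for x using val S1_def by blast
        from h(7) show False
        proof
          assume "j < p" then show False using nS1[of "n-2"] nS1[of "n-1"] ne h qn by auto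
        next
          assume "q < i" then show False using nS1[of 0] nS1[of 1] ne h qn by auto
        qed
      next
        case False
        then have "card S2 = 2" using ab by auto
        have "S2 = {p,q}" using \<open>card S2 = 2\<close> h fin1 card_subset_eq[of S2 "{p,q}"] by auto
        then have nS2: "x < n \<Longrightarrow> x \<noteq> p \<Longrightarrow> x \<noteq> q \<Longrightarrow> u!x = 1" for x using val S2_def by blast
        from h(7) show False
        proof
          assume "j < p" then show False using nS2[of 0] nS2[of 1] ne h qn by auto
        next
          assume "q < i" then show False using nS2[of "n-2"] nS2[of "n-1"] ne h qn by auto
        qed
      qed
    qed
  next
    assume A: "2 \<le> card S1 \<and> 2 \<le> card S2 \<and> (3 \<le> card S1 \<and> 3 \<le> card S2 \<or> u ! 0 = u ! 1 \<or> u ! (n - 2) = u ! (n - 1))"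
    obtain i j where ij: "i \<in> S1" "j \<in> S1" "i < j" using A two_el by metis
    obtain p q where pq: "p \<in> S2" "q \<in> S2" "p < q" using A two_el by metis
    have S12: "x \<in> S1 \<Longrightarrow> x \<in> S2 \<Longrightarrow> False" for x unfolding S1_def S2_def by auto
    have n4: "4 \<le> n"
    proof -
      have "S1 \<union> S2 \<subseteq> {..<n}" unfolding S1_def S2_def by auto
      then have "card (S1 \<union> S2) \<le> n" by (metis card_lessThan card_mono finite_lessThan)
      moreover have "card (S1 \<union> S2) = card S1 + card S2" using S12 fin1 by (meson card_Un_disjoint disjoint_iff)
      ultimately show ?thesis using A by linarith
    qed
    have inS: "x < n \<Longrightarrow> x \<in> S1 \<or> x \<in> S2" for x using val S1_def S2_def by auto
    consider "3 \<le> card S1 \<and> 3 \<le> card S2" | "u!0 = u!1" | "u!(n-2) = u!(n-1)" using A by blast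
    then show "DF2 u"
    proof cases
      case 1
      define a where "a = Min S1"
      define b where "b = Min (S1 - {a})"
      have aS: "a \<in> S1" using ij fin1 a_def by (metis Min_in empty_iff)
      have c2': "2 \<le> card (S1 - {a})" using 1 aS fin1 by (simp, linarith)
      then have ne2: "S1 - {a} \<noteq> {}" by (metis card.empty not_numeral_le_zero)
      have bS: "b \<in> S1 - {a}" unfolding b_def using ne2 fin1 by (intro Min_in) auto
      have ab: "a < b" proof - have "a \<le> b" unfolding a_def using bS fin1 by (intro Min_le) auto then show ?thesis using bS by auto qed
      have c3: "1 \<le> card (S1 - {a} - {b})" using c2' bS fin1 card_Diff_singleton[of b "S1-{a}"] by simp
      then have "S1 - {a} - {b} \<noteq> {}" by (metis card.empty not_one_le_zero) then obtain k where kS: "k \<in> S1 - {a} - {b}" by blast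
      have bk: "b < k" proof - have "b \<le> k" unfolding b_def using kS fin1 by (intro Min_le) auto then show ?thesis using kS by auto qed
      show ?thesis
      proof (cases "\<exists>p q. p \<in> S2 \<and> q \<in> S2 \<and> b < p \<and> p < q")
        case True
        then show ?thesis unfolding DF using aS bS ab by blast
      next
        case False
        have le1: "card (S2 \<inter> {b<..}) \<le> 1"
        proof (rule ccontr)
          assume "\<not> ?thesis"
          then obtain p q where "p \<in> S2 \<inter> {b<..}" "q \<in> S2 \<inter> {b<..}" "p < q" using two_el by (metis not_less_eq_eq numeral_2_eq_2 One_nat_def)
          then show False using False by auto
        qed
        have "S2 \<subseteq> (S2 \<inter> {..<b}) \<union> (S2 \<inter> {b<..})" using bS S12 by (auto, metis linorder_neqE_nat)
        then have "card S2 \<le> card (S2 \<inter> {..<b}) + card (S2 \<inter> {b<..})" 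
          by (metis card_Un_le card_mono fin1(2) finite_Int finite_Un order_trans)
        then have "2 \<le> card (S2 \<inter> {..<b})" using 1 le1 by linarith
        then obtain p q where "p \<in> S2 \<inter> {..<b}" "q \<in> S2 \<inter> {..<b}" "p < q" using two_el by metis
        then show ?thesis unfolding DF using bS kS bk by blast
      qed
    next
      case 2
      show ?thesis
      proof (cases "u!0 = 1")
        case True
        then have h0: "0 \<in> S1" "1 \<in> S1" using 2 n4 S1_def by auto
        have "p \<noteq> 0" "p \<noteq> 1" using pq(1) h0 S12 by metis+
        then have "1 < p" by linarith
        then show ?thesis using DFI[of 0 1 p q] h0 pq by simp
      next
        case False
        then have h0: "0 \<in> S2" "1 \<in> S2" using 2 n4 val[of 0] val[of 1] unfolding S2_def by auto
        have "i \<noteq> 0" "i \<noteq> 1" using ij(1) h0 S12 by metis+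
        then have "1 < i" by linarith
        then show ?thesis using DFI[of i j 0 1] h0 ij by simp
      qed
    next
      case 3
      have lt: "x \<in> S1 \<or> x \<in> S2 \<Longrightarrow> x < n" for x unfolding S1_def S2_def by auto
      show ?thesis
      proof (cases "u!(n-2) = 1")
        case True
        then have h0: "n-2 \<in> S1" "n-1 \<in> S1" using 3 n4 S1_def by auto
        have "q \<noteq> n-2" "q \<noteq> n-1" "q < n" using pq(2) h0 S12 lt by metis+
        then have "q < n-2" by linarith
        then show ?thesis using DFI[of "n-2" "n-1" p q] h0 pq n4 by simp
      next
        case False
        then have h0: "n-2 \<in> S2" "n-1 \<in> S2" using 3 n4 val[of "n-2"] val[of "n-1"] unfolding S2_def by auto
        have "j \<noteq> n-2" "j \<noteq> n-1" "j < n" using ij(2) h0 S12 lt by metis+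
        then have "j < n-2" by linarith
        then show ?thesis using DFI[of i j "n-2" "n-1"] h0 ij n4 by simp
      qed
    qed
  qed
qed



definition addr :: "nat \<Rightarrow> nat \<Rightarrow> nat" where
  "addr n i = (if i < 2 then n + 5 + i else 3 + i)"

definition DS :: "nat \<Rightarrow> nat list \<Rightarrow> mem \<Rightarrow> bool" where
  "DS n u M \<longleftrightarrow> length u = n \<and> set u \<subseteq> {1,2} \<and> M 3 = n \<and> M 4 = cnt1 u \<and> (\<forall>i<n. M (addr n i) = u!i)"

definition Pupd :: "instr list" where
  "Pupd = [Const 0 2, Lt 0 1 0, Add 1 1 0, Add 1 1 0, Mul 0 0 3, Add 1 1 0, Const 0 3, Add 1 1 0,
         Load 0 1, Store 1 2, Const 1 2, Lt 0 0 1, Lt 2 2 1, Add 4 4 2, Sub 4 4 0, Halt]"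

lemma funpow_numeral': "(f ^^ numeral k) x = (f ^^ pred_numeral k) (f x)"
  by (simp only: numeral_eq_Suc funpow_Suc_right o_apply)
lemma funpow_1': "((f::'a\<Rightarrow>'a) ^^ 1) x = f x" by simp

lemma sub_simp: "M c \<le> M b \<Longrightarrow> M b < 2^w \<Longrightarrow> exec_instr w (Sub a b c) (pc,M) = (Suc pc, M(a := M b - M c))"
proof -
  assume h: "M c \<le> M b" "M b < 2^w"
  then have "M c mod 2^w = M c" by simp
  moreover have "(M b + (2^w - M c)) mod 2^w = M b - M c"
  proof -
    have "M b + (2^w - M c) = (M b - M c) + 2^w" using h by simp
    then have "(M b + (2^w - M c)) mod 2^w = ((M b - M c) + 2^w) mod 2^w" by simp
    also have "\<dots> = M b - M c" proof - have "M b - M c < 2^w" using h by linarith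
      then show ?thesis by (simp only: mod_add_self2 mod_less) qed
    finally show ?thesis .
  qed
  ultimately show ?thesis by simp
qed

lemmas run_simps = step_def halted_def funpow_numeral' funpow_1'

lemma Pu_run:
  assumes W: "n + 40 < 2^w" and i: "i < n" and M4: "M 4 \<le> n"
    and a: "a = 1 \<or> a = 2" and old: "M (addr n i) = 1 \<or> M (addr n i) = 2"
    and M4': "M (addr n i) = 1 \<Longrightarrow> 1 \<le> M 4" and M3: "M 3 = n"
  shows "\<exists>M'. (step Pupd w ^^ 15) (0, M(1:=i, 2:=a)) = (15, M') \<and> M' (addr n i) = a
     \<and> M' 4 = M 4 + (if a = 1 then 1 else 0) - (if M (addr n i) = 1 then 1 else 0)
     \<and> (\<forall>x. 3 \<le> x \<longrightarrow> x \<noteq> 4 \<longrightarrow> x \<noteq> addr n i \<longrightarrow> M' x = M x)"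
proof (cases "i < 2")
  case True
  then have ad: "addr n i = n + 5 + i" unfolding addr_def by simp
  show ?thesis using a old M4' unfolding ad
    apply (elim disjE)
    using W i M4 True M3 apply (simp_all add: run_simps Pupd_def sub_simp add.assoc add.commute add.left_commute del: exec_instr.simps(3))
    done
next
  case False
  then have ad: "addr n i = 3 + i" unfolding addr_def by simp
  show ?thesis using a old M4' unfolding ad
    apply (elim disjE)
    using W i M4 False M3 apply (simp_all add: run_simps Pupd_def sub_simp add.assoc add.commute add.left_commute del: exec_instr.simps(3))
    done
qed

definition Pqry :: "instr list" where
  "Pqry = [Const 0 2, Lt 1 4 0, Jz 1 4, Jmp 36, Sub 1 3 4, Lt 2 1 0, Jz 2 8, Jmp 36,
         Const 0 3, Lt 2 4 0, Lt 1 1 0, Add 2 2 1, Jz 2 34,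
         Const 0 5, Add 0 3 0, Load 0 0, Const 1 6, Add 1 3 1, Load 1 1, Lt 2 0 1, Lt 0 1 0, Add 0 0 2, Jz 0 34,
         Const 0 1, Add 0 3 0, Load 0 0, Const 1 2, Add 1 3 1, Load 1 1, Lt 2 0 1, Lt 0 1 0, Add 0 0 2, Jz 0 34,
         Jmp 36, Const 0 1, Halt, Const 0 0, Halt]"

lemma Pq_run:
  assumes W: "n + 40 < 2^w" and M3: "M 3 = n" and M4: "M 4 \<le> n"
  shows "\<exists>pc M'. (step Pqry w ^^ 40) (0, M) = (pc, M') \<and> halted Pqry (pc, M') \<and>
     (M' 0 \<noteq> 0 \<longleftrightarrow> (2 \<le> M 4 \<and> 2 \<le> n - M 4 \<and> (3 \<le> M 4 \<and> 3 \<le> n - M 4 \<or> M (n+5) = M (n+6) \<or> M (n+1) = M (n+2))))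
     \<and> (\<forall>x. 3 \<le> x \<longrightarrow> M' x = M x)"
proof -
  have n4: "(M 4 < 2) \<or> (2 \<le> M 4 \<and> n - M 4 < 2) \<or> (3 \<le> M 4 \<and> 3 \<le> n - M 4) \<or> (M 4 = 2 \<and> 2 \<le> n - M 4) \<or> (3 \<le> M 4 \<and> n - M 4 = 2)"
    by linarith
  have w0: "0 < w" using W by (cases w) auto
  note assms = assms w0
  from n4 show ?thesis
  proof (elim disjE)
    assume c: "M 4 < 2"
    then show ?thesis using assms by (simp add: run_simps Pqry_def sub_simp del: exec_instr.simps(3))
  next
    assume c: "2 \<le> M 4 \<and> n - M 4 < 2"
    then show ?thesis using assms by (simp add: run_simps Pqry_def sub_simp del: exec_instr.simps(3))
  next
    assume c: "3 \<le> M 4 \<and> 3 \<le> n - M 4"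
    then show ?thesis using assms by (simp add: run_simps Pqry_def sub_simp del: exec_instr.simps(3))
  next
    assume c: "M 4 = 2 \<and> 2 \<le> n - M 4"
    then show ?thesis using assms
      apply (cases rule: linorder_cases[of "M(n+5)" "M(n+6)"]; cases rule: linorder_cases[of "M(n+1)" "M(n+2)"])
      apply (simp_all add: run_simps Pqry_def sub_simp del: exec_instr.simps(3))
      done
  next
    assume c: "3 \<le> M 4 \<and> n - M 4 = 2"
    then show ?thesis using assms
      apply (cases rule: linorder_cases[of "M(n+5)" "M(n+6)"]; cases rule: linorder_cases[of "M(n+1)" "M(n+2)"])
      apply (simp_all add: run_simps Pqry_def sub_simp del: exec_instr.simps(3))
      done
  qed
qed

lemma w_pos: "n + 40 < (2::nat)^w \<Longrightarrow> 0 < w" by (cases w) auto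

definition Pinit :: "instr list" where
  "Pinit = [Const 1 5, Add 1 0 1, Const 2 3, Load 2 2, Store 1 2, Const 1 6, Add 1 0 1, Const 2 4, Load 2 2, Store 1 2,
         Const 1 0, Add 3 0 1, Const 4 0, Const 2 0,
         Lt 0 2 3, Jz 0 31, Const 0 2, Lt 0 2 0, Add 1 2 0, Add 1 1 0, Mul 0 0 3, Add 1 1 0, Const 0 3, Add 1 1 0,
         Load 0 1, Const 1 2, Lt 0 0 1, Add 4 4 0, Const 1 1, Add 2 2 1, Jmp 14, Halt]"

lemma Pi_A:
  assumes W: "n + 40 < 2^w" and M0: "M 0 = n"
  shows "\<exists>M1. (step Pinit w ^^ 14) (0, M) = (14, M1) \<and> M1 3 = n \<and> M1 2 = 0 \<and> M1 4 = 0 \<and>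
     M1 (n+5) = M 3 \<and> M1 (n+6) = M 4 \<and> (\<forall>x. 5 \<le> x \<longrightarrow> x \<noteq> n+5 \<longrightarrow> x \<noteq> n+6 \<longrightarrow> M1 x = M x)"
  using assms by (simp add: run_simps Pinit_def)

lemma Pi_body:
  assumes W: "n + 40 < 2^w" and M3: "M 3 = n" and M2: "M 2 = i" and i: "i < n" and M4: "M 4 \<le> i"
    and v: "M (addr n i) = 1 \<or> M (addr n i) = 2"
  shows "\<exists>M1. (step Pinit w ^^ 17) (14, M) = (14, M1) \<and> M1 3 = n \<and> M1 2 = Suc i \<and>
     M1 4 = M 4 + (if M (addr n i) = 1 then 1 else 0) \<and> (\<forall>x. 5 \<le> x \<longrightarrow> M1 x = M x)"
proof (cases "i < 2")
  case True
  then have ad: "addr n i = n + 5 + i" unfolding addr_def by simp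
  show ?thesis using v unfolding ad
    apply (elim disjE)
    using W i M4 True M3 M2 w_pos[OF W] apply (simp_all add: run_simps Pinit_def add.assoc add.commute add.left_commute)
    done
next
  case False
  then have ad: "addr n i = 3 + i" unfolding addr_def by simp
  show ?thesis using v unfolding ad
    apply (elim disjE)
    using W i M4 False M3 M2 w_pos[OF W] apply (simp_all add: run_simps Pinit_def add.assoc add.commute add.left_commute)
    done
qed

lemma Pi_exit:
  assumes W: "n + 40 < 2^w" and M3: "M 3 = n" and M2: "M 2 = n"
  shows "\<exists>M1. (step Pinit w ^^ 2) (14, M) = (31, M1) \<and> (\<forall>x. 1 \<le> x \<longrightarrow> M1 x = M x)"
  using assms by (simp add: run_simps Pinit_def)



lemma cnt1_take_Suc: "i < length u \<Longrightarrow> cnt1 (take (Suc i) u) = cnt1 (take i u) + (if u!i = 1 then 1 else 0)"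
  by (simp add: cnt1_def take_Suc_conv_app_nth)

lemma cnt1_le: "cnt1 u \<le> length u" unfolding cnt1_def by simp

lemma cnt1_split: "i < length u \<Longrightarrow> cnt1 u = cnt1 (take i u) + (if u!i=1 then 1 else 0) + cnt1 (drop (Suc i) u)"
proof -
  assume "i < length u"
  then have "u = take i u @ u!i # drop (Suc i) u" by (simp add: id_take_nth_drop)
  then have "cnt1 u = cnt1 (take i u @ u!i # drop (Suc i) u)" by simp
  then show ?thesis by (simp add: cnt1_def)
qed

lemma cnt1_update: "i < length u \<Longrightarrow> cnt1 (u[i:=a]) = cnt1 u + (if a=1 then 1 else 0) - (if u!i=1 then 1 else 0)"
proof -
  assume h: "i < length u"
  then have "u[i:=a] = take i u @ a # drop (Suc i) u" by (simp add: upd_conv_take_nth_drop)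
  then have "cnt1 (u[i:=a]) = cnt1 (take i u) + (if a=1 then 1 else 0) + cnt1 (drop (Suc i) u)"
    by (simp add: cnt1_def)
  moreover have "cnt1 u = cnt1 (take i u) + (if u!i=1 then 1 else 0) + cnt1 (drop (Suc i) u)" by (rule cnt1_split[OF h])
  ultimately show ?thesis by (cases "a=1"; cases "u!i=1"; simp only: if_True if_False; linarith)
qed

lemma addr_ge: "5 \<le> addr n i" unfolding addr_def by simp

lemma addr_ge3: "3 \<le> addr n i" unfolding addr_def by simp

lemma addr_inj: "i < n \<Longrightarrow> j < n \<Longrightarrow> addr n i = addr n j \<Longrightarrow> i = j"
  unfolding addr_def by (auto split: if_splits)

lemma halted_stay: "halted P s \<Longrightarrow> (step P w ^^ k) s = s"
  by (induction k) (auto simp: step_def)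

lemma Pi_loop:
  assumes W: "n + 40 < 2^w" and lu: "length u = n" and su: "set u \<subseteq> {1,2}"
  shows "k = n - i \<Longrightarrow> i \<le> n \<Longrightarrow> M 3 = n \<Longrightarrow> M 2 = i \<Longrightarrow> M 4 = cnt1 (take i u) \<Longrightarrow>
    (\<forall>j<n. M (addr n j) = u!j) \<Longrightarrow>
    \<exists>M'. (step Pinit w ^^ (17*k+2)) (14,M) = (31,M') \<and> M' 3 = n \<and> M' 4 = cnt1 u \<and> (\<forall>x\<ge>5. M' x = M x)"
proof (induction k arbitrary: i M)
  case 0
  then have "i = n" by simp
  then obtain M1 where M1: "(step Pinit w ^^ 2) (14, M) = (31, M1)" "\<forall>x. 1 \<le> x \<longrightarrow> M1 x = M x"
    using Pi_exit[OF W] 0 by blast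
  have e2: "17 * 0 + 2 = (2::nat)" by simp
  have e: "(step Pinit w ^^ (17*0+2)) (14,M) = (31,M1)" unfolding e2 by (rule M1(1))
  have m3: "M1 3 = n" using M1(2) 0 by simp
  have m4: "M1 4 = cnt1 u" using M1(2) 0 \<open>i = n\<close> lu by simp
  show ?case using e m3 m4 M1(2) by (intro exI[of _ M1]) simp
next
  case (Suc k)
  then have i: "i < n" by simp
  have "u!i \<in> set u" using i lu by simp
  then have "u!i = 1 \<or> u!i = 2" using su by blast
  moreover have "M (addr n i) = u!i" using Suc.prems(6) i by blast
  ultimately have v: "M (addr n i) = 1 \<or> M (addr n i) = 2" by simp
  have M4: "M 4 \<le> i" using Suc.prems cnt1_le[of "take i u"] by simp
  obtain M1 where M1: "(step Pinit w ^^ 17) (14, M) = (14, M1)" "M1 3 = n" "M1 2 = Suc i"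
     "M1 4 = M 4 + (if M (addr n i) = 1 then 1 else 0)" "\<forall>x. 5 \<le> x \<longrightarrow> M1 x = M x"
    using Pi_body[OF W _ _ i M4 v] Suc.prems by blast
  have c: "M1 4 = cnt1 (take (Suc i) u)" using M1(4) Suc.prems cnt1_take_Suc[of i u] i lu by simp
  have wd: "\<forall>j<n. M1 (addr n j) = u!j" using M1(5) Suc.prems addr_ge by simp
  obtain M' where M': "(step Pinit w ^^ (17*k+2)) (14,M1) = (31,M')" "M' 3 = n" "M' 4 = cnt1 u" "\<forall>x\<ge>5. M' x = M1 x"
  proof -
    have "\<exists>M'. (step Pinit w ^^ (17*k+2)) (14,M1) = (31,M') \<and> M' 3 = n \<and> M' 4 = cnt1 u \<and> (\<forall>x\<ge>5. M' x = M1 x)"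
    proof (rule Suc.IH)
      show "k = n - Suc i" using Suc.prems(1) by simp
      show "Suc i \<le> n" using i by simp
    qed (use M1 c wd in simp_all)
    then show ?thesis using that by blast
  qed
  have "(step Pinit w ^^ (17*Suc k+2)) (14,M) = (step Pinit w ^^ (17*k+2)) ((step Pinit w ^^ 17) (14,M))"
  proof -
    have "17*Suc k + 2 = (17*k+2) + (17::nat)" by simp
    then show ?thesis by (simp only: funpow_add o_apply)
  qed
  then show ?case using M' M1 by auto
qed

lemma Pi_run:
  assumes W: "n + 40 < 2^w" and lu: "length u = n" and su: "set u \<subseteq> {1,2}"
  shows "\<exists>M0. runs_in Pinit w (init_mem u) (17*n+16) M0 \<and> DS n u M0"
proof -
  have i0: "init_mem u 0 = n" using lu by (simp add: init_mem_def)
  obtain M1 where M1: "(step Pinit w ^^ 14) (0, init_mem u) = (14, M1)" "M1 3 = n" "M1 2 = 0" "M1 4 = 0"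
     "M1 (n+5) = init_mem u 3" "M1 (n+6) = init_mem u 4"
     "\<forall>x. 5 \<le> x \<longrightarrow> x \<noteq> n+5 \<longrightarrow> x \<noteq> n+6 \<longrightarrow> M1 x = init_mem u x"
    using Pi_A[of n w "init_mem u", OF W i0] by blast
  have wd: "\<forall>j<n. M1 (addr n j) = u!j"
  proof (intro allI impI)
    fix j assume j: "j < n"
    show "M1 (addr n j) = u!j"
    proof (cases "j < 2")
      case True
      then consider "j = 0" | "j = 1" by linarith
      then show ?thesis
      proof cases
        case 1 then show ?thesis using M1(5) j lu by (simp add: addr_def init_mem_def)
      next
        case 2
        have "addr n j = n + 6" using 2 by (simp add: addr_def)
        moreover have "init_mem u 4 = u!1" using 2 j lu by (simp add: init_mem_def)
        ultimately show ?thesis using M1(6) 2 by simp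
      qed
    next
      case False
      then have "addr n j = 3 + j" by (simp add: addr_def)
      moreover have "M1 (3 + j) = init_mem u (3 + j)" using M1(7) False j by simp
      ultimately show ?thesis using j lu by (simp add: init_mem_def)
    qed
  qed
  have "\<exists>M'. (step Pinit w ^^ (17*n+2)) (14,M1) = (31,M') \<and> M' 3 = n \<and> M' 4 = cnt1 u \<and> (\<forall>x\<ge>5. M' x = M1 x)"
    by (rule Pi_loop[OF W lu su, of n 0 M1]) (use M1 wd in \<open>simp_all add: cnt1_def take_eq_Nil\<close>)
  then obtain M' where M': "(step Pinit w ^^ (17*n+2)) (14,M1) = (31,M')" "M' 3 = n" "M' 4 = cnt1 u" "\<forall>x\<ge>5. M' x = M1 x"
    by blast
  have "(step Pinit w ^^ (17*n+16)) (0, init_mem u) = (step Pinit w ^^ (17*n+2)) ((step Pinit w ^^ 14) (0, init_mem u))"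
  proof -
    have "17*n+16 = (17*n+2) + (14::nat)" by simp
    then show ?thesis by (simp only: funpow_add o_apply)
  qed
  then have run: "(step Pinit w ^^ (17*n+16)) (0, init_mem u) = (31, M')" using M1(1) M'(1) by simp
  have h: "halted Pinit (31, M')" by (simp add: halted_def Pinit_def)
  have "runs_in Pinit w (init_mem u) (17*n+16) M'" unfolding runs_in_def using run h by simp
  moreover have "DS n u M'" unfolding DS_def using lu su M'(2,3,4) wd addr_ge by simp
  ultimately show ?thesis by blast
qed

lemma Pu_ok:
  assumes W: "n + 40 < 2^w" and D: "DS n u M" and i: "i < n" and a: "a = 1 \<or> a = 2"
  shows "\<exists>M'. runs_in Pupd w (M(1:=i, 2:=a)) 40 M' \<and> DS n (u[i:=a]) M'"
proof -
  have lu: "length u = n" and su: "set u \<subseteq> {1,2}" and M3: "M 3 = n" and M4: "M 4 = cnt1 u"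
    and wd: "\<forall>j<n. M (addr n j) = u!j" using D unfolding DS_def by auto
  have "u!i \<in> set u" using i lu by simp
  then have ui: "u!i = 1 \<or> u!i = 2" using su by blast
  have old: "M (addr n i) = u!i" using wd i by blast
  have M4': "M (addr n i) = 1 \<Longrightarrow> 1 \<le> M 4" using old M4 cnt1_split[of i u] i lu by simp
  have M4le: "M 4 \<le> n" using M4 cnt1_le[of u] lu by simp
  obtain M' where M': "(step Pupd w ^^ 15) (0, M(1:=i, 2:=a)) = (15, M')" "M' (addr n i) = a"
     "M' 4 = M 4 + (if a = 1 then 1 else 0) - (if M (addr n i) = 1 then 1 else 0)"
     "\<forall>x. 3 \<le> x \<longrightarrow> x \<noteq> 4 \<longrightarrow> x \<noteq> addr n i \<longrightarrow> M' x = M x"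
    using Pu_run[OF W i M4le a _ M4' M3] ui old by auto
  have h: "halted Pupd (15, M')" by (simp add: halted_def Pupd_def)
  have "(step Pupd w ^^ 40) (0, M(1:=i, 2:=a)) = (step Pupd w ^^ 25) ((step Pupd w ^^ 15) (0, M(1:=i, 2:=a)))"
  proof -
    have "40 = 25 + (15::nat)" by simp
    then show ?thesis by (simp only: funpow_add o_apply)
  qed
  also have "\<dots> = (15, M')" using M'(1) halted_stay[OF h] by simp
  finally have run: "(step Pupd w ^^ 40) (0, M(1:=i, 2:=a)) = (15, M')" .
  have r: "runs_in Pupd w (M(1:=i, 2:=a)) 40 M'" unfolding runs_in_def using run h by simp
  have ad3: "addr n i \<noteq> 3" "addr n i \<noteq> 4" using addr_ge[of n i] by auto
  have "DS n (u[i:=a]) M'" unfolding DS_def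
  proof (intro conjI allI impI)
    show "length (u[i:=a]) = n" using lu by simp
    show "set (u[i:=a]) \<subseteq> {1,2}" using su a by (meson insert_subset set_update_subset_insert subset_trans insert_iff)
    show "M' 3 = n" using M'(4) ad3 M3 by simp
    show "M' 4 = cnt1 (u[i:=a])" using M'(3) M4 old cnt1_update[of i u a] i lu by simp
    fix j assume j: "j < n"
    show "M' (addr n j) = u[i:=a] ! j"
    proof (cases "j = i")
      case True then show ?thesis using M'(2) lu i by simp
    next
      case False
      then have "addr n j \<noteq> addr n i" using addr_inj j i by blast
      then have "M' (addr n j) = M (addr n j)" using M'(4) addr_ge[of n j] by simp
      then show ?thesis using wd j False by simp
    qed
  qed
  then show ?thesis using r by blast
qed

lemma Pq_ok:
  assumes W: "n + 40 < 2^w" and D: "DS n u M"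
  shows "\<exists>M'. runs_in Pqry w M 40 M' \<and> (M' 0 \<noteq> 0 \<longleftrightarrow> DF2 u) \<and> DS n u M'"
proof -
  have lu: "length u = n" and su: "set u \<subseteq> {1,2}" and M3: "M 3 = n" and M4: "M 4 = cnt1 u"
    and wd: "\<forall>j<n. M (addr n j) = u!j" using D unfolding DS_def by auto
  have M4le: "M 4 \<le> n" using M4 cnt1_le[of u] lu by simp
  obtain pc M' where P: "(step Pqry w ^^ 40) (0, M) = (pc, M')" "halted Pqry (pc, M')"
     "(M' 0 \<noteq> 0 \<longleftrightarrow> (2 \<le> M 4 \<and> 2 \<le> n - M 4 \<and> (3 \<le> M 4 \<and> 3 \<le> n - M 4 \<or> M (n+5) = M (n+6) \<or> M (n+1) = M (n+2))))"
     "\<forall>x. 3 \<le> x \<longrightarrow> M' x = M x"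
    using Pq_run[OF W M3 M4le] by blast
  have r: "runs_in Pqry w M 40 M'" unfolding runs_in_def using P(1,2) by simp
  have ans: "(M' 0 \<noteq> 0) \<longleftrightarrow> DF2 u"
  proof -
    have "DF2 u \<longleftrightarrow> (2 \<le> cnt1 u \<and> 2 \<le> n - cnt1 u \<and>
     (3 \<le> cnt1 u \<and> 3 \<le> n - cnt1 u \<or> u!0 = u!1 \<or> u!(n - 2) = u!(n - 1)))"
      using DF2_char[OF su] lu by simp
    moreover have "2 \<le> cnt1 u \<Longrightarrow> 2 \<le> n - cnt1 u \<Longrightarrow>
       M (n+5) = u!0 \<and> M (n+6) = u!1 \<and> M (n+1) = u!(n-2) \<and> M (n+2) = u!(n-1)"
    proof -
      assume "2 \<le> cnt1 u" "2 \<le> n - cnt1 u"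
      then have n4: "4 \<le> n" by linarith
      have "M (addr n 0) = u!0" "M (addr n 1) = u!1" "M (addr n (n-2)) = u!(n-2)" "M (addr n (n-1)) = u!(n-1)"
        using wd n4 by auto
      moreover have "addr n 0 = n+5" "addr n 1 = n+6" "addr n (n-2) = n+1" "addr n (n-1) = n+2"
        using n4 by (auto simp: addr_def)
      ultimately show ?thesis by simp
    qed
    ultimately show ?thesis using P(3) M4 by auto
  qed
  have "\<forall>j. M' (addr n j) = M (addr n j)" using P(4) addr_ge3 by blast
  then have "DS n u M'" unfolding DS_def using lu su M3 M4 wd P(4) by simp
  then show ?thesis using r ans by blast
qed

lemma serve_ok:
  assumes W: "n + 40 < 2^w"
  shows "DS n u M \<Longrightarrow> \<forall>o'\<in>set ops. valid_op n o' \<Longrightarrow> serve Pupd Pqry w M u ops (40 * length ops)"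
proof (induction ops arbitrary: M u)
  case Nil
  then show ?case using serve_nil by simp
next
  case (Cons o' ops)
  show ?case
  proof (cases o')
    case (Upd i a)
    then have ia: "i < n" "a = 1 \<or> a = 2" using Cons.prems(2) by (auto simp: valid_op_def)
    obtain M' where M': "runs_in Pupd w (M(1:=i, 2:=a)) 40 M'" "DS n (u[i:=a]) M'"
      using Pu_ok[OF W Cons.prems(1) ia] by blast
    have "serve Pupd Pqry w M' (u[i:=a]) ops (40 * length ops)" using Cons.IH[OF M'(2)] Cons.prems(2) by simp
    then have "serve Pupd Pqry w M u (Upd i a # ops) (40 + 40 * length ops)" using serve_upd M'(1) by blast
    then show ?thesis using Upd by simp
  next
    case Qry
    obtain M' where M': "runs_in Pqry w M 40 M'" "(M' 0 \<noteq> 0) = DF2 u" "DS n u M'"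
      using Pq_ok[OF W Cons.prems(1)] by blast
    have "serve Pupd Pqry w M' u ops (40 * length ops)" using Cons.IH[OF M'(3)] Cons.prems(2) by simp
    then have "serve Pupd Pqry w M u (Qry # ops) (40 + 40 * length ops)" using serve_qry M'(1,2) by blast
    then show ?thesis using Qry by simp
  qed
qed

theorem lemma33:
  shows "\<exists>(Pi :: instr list) (Pu :: instr list) (Pq :: instr list) (c :: nat) (d :: nat).
    \<forall>(n :: nat) (w :: nat) (u :: nat list) (ops :: op list).
      d * (n + 1) \<le> 2 ^ w \<longrightarrow> length u = n \<longrightarrow> set u \<subseteq> {1, 2} \<longrightarrow>
      (\<forall>o' \<in> set ops. valid_op n o') \<longrightarrow>
      (\<exists>t0 M0 T. runs_in Pi w (init_mem u) t0 M0 \<and> serve Pu Pq w M0 u ops T \<and>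
                 t0 + T \<le> c * (n + length ops + 1))"
  apply (rule exI[of _ Pinit], rule exI[of _ Pupd], rule exI[of _ Pqry], rule exI[of _ 40], rule exI[of _ 41])
proof (intro allI impI)
  fix n w :: nat and u :: "nat list" and ops :: "op list"
  assume d: "41 * (n + 1) \<le> 2 ^ w" and lu: "length u = n" and su: "set u \<subseteq> {1, 2}"
    and vo: "\<forall>o' \<in> set ops. valid_op n o'"
  have "n + 40 < 41 * (n + 1)" by simp
  then have W: "n + 40 < 2^w" using d by linarith
  obtain M0 where M0: "runs_in Pinit w (init_mem u) (17*n+16) M0" "DS n u M0" using Pi_run[OF W lu su] by blast
  have "serve Pupd Pqry w M0 u ops (40 * length ops)" using serve_ok[OF W M0(2) vo] .
  moreover have "17*n+16 + 40 * length ops \<le> 40 * (n + length ops + 1)" by simp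
  ultimately show "\<exists>t0 M0 T. runs_in Pinit w (init_mem u) t0 M0 \<and> serve Pupd Pqry w M0 u ops T \<and>
                 t0 + T \<le> 40 * (n + length ops + 1)" using M0(1) by blast
qed

end
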